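(* Let $k\ge 2$ be an integer. Then $S_{3,2}(k;k)=k^2-k-1$.
   Context: Let $k,r$ be positive integers with $r\mid k$. A solution to $\mathcal{E}$ is a $k$-tuple $(x_1,\dots,x_k)$ of positive integers (not necessarily distinct) with $\sum_{i=1}^{k-1}x_i=x_k$; it lies in $[1,n]$ if all $x_i\in\{1,\dots,n\}$. Given a coloring $\chi$ of $[1,n]$ with colors in $\{0,1\}$ (viewed as integers), a solution is $r$-zero-sum if $\sum_{i=1}^k\chi(x_i)\equiv 0\pmod r$. $S_{3,2}(k;r)$ denotes the least positive integer $n$ such that every coloring $\chi:[1,n]\to\{0,1\}$ admits an $r$-zero-sum solution to $\mathcal{E}$ in $[1,n]$. *)

theory Defs
  imports Main
begin

definition is_solution_in :: "nat \<Rightarrow> nat \<Rightarrow> (nat \<Rightarrow> nat) \<Rightarrow> bool" where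
  "is_solution_in k n x \<longleftrightarrow>
     (\<forall>i\<in>{1..k}. x i \<in> {1..n}) \<and> (\<Sum>i=1..k-1. x i) = x k"

definition zero_sum :: "nat \<Rightarrow> nat \<Rightarrow> (nat \<Rightarrow> nat) \<Rightarrow> (nat \<Rightarrow> nat) \<Rightarrow> bool" where
  "zero_sum k r \<chi> x \<longleftrightarrow> (\<Sum>i=1..k. \<chi> (x i)) mod r = 0"

definition is_coloring :: "nat \<Rightarrow> (nat \<Rightarrow> nat) \<Rightarrow> bool" where
  "is_coloring n \<chi> \<longleftrightarrow> (\<forall>i\<in>{1..n}. \<chi> i \<in> {0,1})"

definition S32 :: "nat \<Rightarrow> nat \<Rightarrow> nat" where
  "S32 k r = (LEAST n. n > 0 \<and>
     (\<forall>\<chi>. is_coloring n \<chi> \<longrightarrow> (\<exists>x. is_solution_in k n x \<and> zero_sum k r \<chi> x)))"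

end

theory Submission
  imports Defs
begin

lemma sol2:
  assumes k: "k \<ge> 2" and ab: "a + b = k - 1"
    and rng: "p \<in> {1..n}" "q \<in> {1..n}" "y \<in> {1..n}"
    and eq: "a*p + b*q = y"
    and col: "\<chi> p = c" "\<chi> q = c" "\<chi> y = c"
  shows "\<exists>x. is_solution_in k n x \<and> zero_sum k k \<chi> x"
proof -
  define x where "x = (\<lambda>i::nat. if i = k then y else if i \<le> a then p else q)"
  have s: "(\<Sum>i=1..k-1. x i) = (\<Sum>i=1..k-1. if i \<le> a then p else q)"
    by (rule sum.cong) (auto simp: x_def)
  also have "\<dots> = (\<Sum>i\<in>{1..k-1} \<inter> {i. i \<le> a}. p) + (\<Sum>i\<in>{1..k-1} \<inter> - {i. i \<le> a}. q)"
    by (rule sum.If_cases) simp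
  also have "{1..k-1} \<inter> {i. i \<le> a} = {1..a}" using ab by auto
  also have "{1..k-1} \<inter> - {i. i \<le> a} = {a+1..k-1}" by auto
  finally have "(\<Sum>i=1..k-1. x i) = a*p + (k-1-a)*q" by (simp add: mult.commute)
  moreover have "k-1-a = b" using ab by simp
  ultimately have "(\<Sum>i=1..k-1. x i) = y" using eq by simp
  moreover have "\<forall>i\<in>{1..k}. x i \<in> {1..n}" using rng by (auto simp: x_def)
  moreover have "(\<Sum>i=1..k. \<chi> (x i)) = (\<Sum>i=1..k. c)"
    by (rule sum.cong) (auto simp: x_def col)
  moreover have "x k = y" by (simp add: x_def)
  ultimately show ?thesis
    by (auto simp: is_solution_in_def zero_sum_def intro!: exI[of _ x])
qed

lemma mono_of_zs:
  assumes k: "k \<ge> 1" and col: "is_coloring n \<chi>"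
    and rng: "\<forall>i\<in>{1..k}. x i \<in> {1..n}"
    and zs: "zero_sum k k \<chi> x"
  shows "(\<forall>i\<in>{1..k}. \<chi> (x i) = 0) \<or> (\<forall>i\<in>{1..k}. \<chi> (x i) = 1)"
proof -
  have b: "\<forall>i\<in>{1..k}. \<chi> (x i) \<le> 1" using col rng by (force simp: is_coloring_def)
  define s where "s = (\<Sum>i=1..k. \<chi> (x i))"
  have "s \<le> (\<Sum>i=1..k. 1)" unfolding s_def by (rule sum_mono) (use b in auto)
  hence sk: "s \<le> k" by simp
  have "s mod k = 0" using zs by (simp add: zero_sum_def s_def)
  hence "s = 0 \<or> s = k" using sk k
    by (metis dvd_imp_le le_antisym mod_0_imp_dvd not_gr_zero)
  thus ?thesis
  proof
    assume "s = 0" thus ?thesis by (simp add: s_def)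
  next
    assume sk: "s = k"
    show ?thesis
    proof (rule disjI2, rule ccontr)
      assume "\<not> (\<forall>i\<in>{1..k}. \<chi> (x i) = 1)"
      then obtain j where j: "j \<in> {1..k}" "\<chi> (x j) \<noteq> 1" by blast
      hence j0: "\<chi> (x j) = 0" using b by force
      have "s = \<chi> (x j) + (\<Sum>i\<in>{1..k}-{j}. \<chi> (x i))"
        unfolding s_def using j by (simp add: sum.remove)
      also have "(\<Sum>i\<in>{1..k}-{j}. \<chi> (x i)) \<le> (\<Sum>i\<in>{1..k}-{j}. 1)"
        by (rule sum_mono) (use b in auto)
      finally have "s \<le> k - 1" using j j0 by simp
      thus False using sk k by simp
    qed
  qed
qed

theorem mainTheorem6:
  fixes k :: nat
  assumes "k \<ge> 2"
  shows "S32 k k = k^2 - k - 1"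
proof -
  define m where "m = k - 1"
  have m1: "m \<ge> 1" and km: "k = m + 1" using assms by (auto simp: m_def)
  have N: "k^2 - k - 1 = m*m + m - 1" unfolding km by (simp add: power2_eq_square algebra_simps)
  let ?P = "\<lambda>n. n > 0 \<and> (\<forall>\<chi>. is_coloring n \<chi> \<longrightarrow> (\<exists>x. is_solution_in k n x \<and> zero_sum k k \<chi> x))"
  have up: "?P (m*m+m-1)"
  proof (intro conjI allI impI)
    show "m*m+m-1 > 0" using m1 le_square[of m] by linarith
  next
    fix \<chi> assume col: "is_coloring (m*m+m-1) \<chi>"
    let ?N = "m*m+m-1"
    show "\<exists>x. is_solution_in k ?N x \<and> zero_sum k k \<chi> x"
    proof (cases "m = 1")
      case True
      show ?thesis
        by (rule sol2[where a=0 and b=1 and p=1 and q=1 and y=1 and c="\<chi> 1"]) (use True assms km in auto)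
    next
      case False
      hence m2: "m \<ge> 2" using m1 by simp
      have mm: "m*m \<ge> 2*m" using m2 by simp
      have bin: "\<And>v. v \<in> {1..?N} \<Longrightarrow> \<chi> v = 0 \<or> \<chi> v = 1"
        using col by (auto simp: is_coloring_def)
      show ?thesis
      proof (rule ccontr)
        assume no: "\<not> ?thesis"
        have nm: "\<not> (\<chi> p = \<chi> q \<and> \<chi> q = \<chi> y)"
          if "a + b = m" "p \<in> {1..?N}" "q \<in> {1..?N}" "y \<in> {1..?N}" "a*p + b*q = y" for a b p q y
          using sol2[of k a b p ?N q y \<chi> "\<chi> y"] that no assms km by auto
        have q1: "m*m \<ge> 2*m" "m*m \<ge> m" using m2 mm by simp_all
        have r1: "1 \<in> {1..?N}" "m \<in> {1..?N}" "m*m \<in> {1..?N}" "?N \<in> {1..?N}"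
          "2*m-1 \<in> {1..?N}" "m*m-m+1 \<in> {1..?N}" "2 \<in> {1..?N}"
        proof -
          show "1 \<in> {1..?N}" using m2 q1 by simp
          show mN: "m \<in> {1..?N}" unfolding atLeastAtMost_iff using m2 q1 by linarith
          show "m*m \<in> {1..?N}" using m2 q1 by simp
          show "?N \<in> {1..?N}" using m2 q1 by simp
          show "2*m-1 \<in> {1..?N}" unfolding atLeastAtMost_iff using m2 q1 by linarith
          show "m*m-m+1 \<in> {1..?N}" using m2 q1 by simp
          show "2 \<in> {1..?N}" using mN m2 unfolding atLeastAtMost_iff by linarith
        qed
        have s1: "\<chi> m \<noteq> \<chi> 1" using nm[of m 0 1 1 m] r1 by simp
        have s2: "\<chi> (m*m) \<noteq> \<chi> m" using nm[of m 0 m m "m*m"] r1 by simp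
        obtain j where j: "m = j + 2" using m2 by (metis add.commute le_Suc_ex)
        have e: "(m-1)*1 + 1*(m*m) = m*m+m-1"
          "(m-1)*m + 1*(2*m-1) = m*m+m-1"
          "(m-1)*1 + 1*(m*m-m+1) = m*m"
          "(m-1)*2 + 1*(m*m-m+1) = m*m+m-1"
          "(m-1)*2 + 1*1 = 2*m-1" unfolding j by (simp_all add: algebra_simps)
        have am: "m - 1 + 1 = m" using m2 by simp
        have s3: "\<not> (\<chi> 1 = \<chi> (m*m) \<and> \<chi> (m*m) = \<chi> ?N)"
          by (rule nm[OF am r1(1) r1(3) r1(4) e(1)])
        have s4: "\<not> (\<chi> m = \<chi> (2*m-1) \<and> \<chi> (2*m-1) = \<chi> ?N)"
          by (rule nm[OF am r1(2) r1(5) r1(4) e(2)])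
        have s5: "\<not> (\<chi> 1 = \<chi> (m*m-m+1) \<and> \<chi> (m*m-m+1) = \<chi> (m*m))"
          by (rule nm[OF am r1(1) r1(6) r1(3) e(3)])
        have s6: "\<not> (\<chi> 2 = \<chi> (m*m-m+1) \<and> \<chi> (m*m-m+1) = \<chi> ?N)"
          by (rule nm[OF am r1(7) r1(6) r1(4) e(4)])
        have s7: "\<not> (\<chi> 2 = \<chi> 1 \<and> \<chi> 1 = \<chi> (2*m-1))"
          by (rule nm[OF am r1(7) r1(1) r1(5) e(5)])
        have b: "\<chi> 1 = 0 \<or> \<chi> 1 = 1" "\<chi> m = 0 \<or> \<chi> m = 1" "\<chi> (m*m) = 0 \<or> \<chi> (m*m) = 1"
          "\<chi> ?N = 0 \<or> \<chi> ?N = 1" "\<chi> (2*m-1) = 0 \<or> \<chi> (2*m-1) = 1"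
          "\<chi> (m*m-m+1) = 0 \<or> \<chi> (m*m-m+1) = 1" "\<chi> 2 = 0 \<or> \<chi> 2 = 1"
          using bin r1 by blast+
        have t: "\<And>u v w::nat. (u = 0 \<or> u = 1) \<Longrightarrow> (v = 0 \<or> v = 1) \<Longrightarrow> (w = 0 \<or> w = 1) \<Longrightarrow> u \<noteq> v \<Longrightarrow> w \<noteq> v \<Longrightarrow> u = w" by auto
        have s1': "\<chi> 1 \<noteq> \<chi> m" using s1 by simp
        have c5': "\<chi> 1 \<noteq> \<chi> (m*m-m+1)" if "\<chi> (m*m-m+1) \<noteq> \<chi> 1" using that by simp
        have c2: "\<chi> (m*m) = \<chi> 1" using t[OF b(3) b(2) b(1) s2 s1'] .
        have cN: "\<chi> ?N \<noteq> \<chi> 1" using s3 c2 by simp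
        have cN2: "\<chi> ?N = \<chi> m" using t[OF b(4) b(1) b(2) cN s1] .
        have c4: "\<chi> (2*m-1) \<noteq> \<chi> m" using s4 cN2 by simp
        have c4b: "\<chi> (2*m-1) = \<chi> 1" using t[OF b(5) b(2) b(1) c4 s1'] .
        have c5: "\<chi> (m*m-m+1) \<noteq> \<chi> 1" using s5 c2 by simp
        have c5b: "\<chi> (m*m-m+1) = \<chi> ?N" using t[OF b(6) b(1) b(4) c5 cN] .
        have c6: "\<chi> 2 \<noteq> \<chi> (m*m-m+1)" using s6 c5b by simp
        have c6b: "\<chi> 2 = \<chi> 1" using t[OF b(7) b(6) b(1) c6 c5'[OF c5]] .
        show False using s7 c6b c4b by simp
      qed
    qed
  qed
  have low: "\<not> ?P n" if "n < m*m+m-1" for n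
  proof
    assume Pn: "?P n"
    define \<chi> where "\<chi> = (\<lambda>i::nat. if m \<le> i \<and> i \<le> m*m-1 then 1 else 0::nat)"
    have "is_coloring n \<chi>" by (auto simp: is_coloring_def \<chi>_def)
    then obtain x where sol: "is_solution_in k n x" and zs: "zero_sum k k \<chi> x" using Pn by blast
    have rng: "\<forall>i\<in>{1..k}. x i \<in> {1..n}" and eq: "(\<Sum>i=1..m. x i) = x k"
      using sol by (auto simp: is_solution_in_def m_def)
    have nk: "x k \<le> n" "x k \<ge> 1" using rng km by auto
    have rs: "\<forall>i\<in>{1..m}. 1 \<le> x i \<and> x i \<le> n" using rng km by auto
    have "(\<forall>i\<in>{1..k}. \<chi> (x i) = 0) \<or> (\<forall>i\<in>{1..k}. \<chi> (x i) = 1)"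
      by (rule mono_of_zs[OF _ \<open>is_coloring n \<chi>\<close> rng zs]) (use km in auto)
    thus False
    proof
      assume all0: "\<forall>i\<in>{1..k}. \<chi> (x i) = 0"
      hence red: "\<forall>i\<in>{1..k}. x i < m \<or> x i \<ge> m*m"
        by (auto simp: \<chi>_def split: if_splits)
      show False
      proof (cases "\<exists>j\<in>{1..m}. x j \<ge> m*m")
        case True
        then obtain j where j: "j \<in> {1..m}" "x j \<ge> m*m" by blast
        have "(\<Sum>i\<in>{1..m}-{j}. 1) \<le> (\<Sum>i\<in>{1..m}-{j}. x i)"
          by (rule sum_mono) (use rs in auto)
        hence "m - 1 \<le> (\<Sum>i\<in>{1..m}-{j}. x i)" using j by simp
        moreover have "(\<Sum>i=1..m. x i) = x j + (\<Sum>i\<in>{1..m}-{j}. x i)"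
          using j by (simp add: sum.remove)
        ultimately show False using eq nk j that by linarith
      next
        case False
        hence lt: "\<forall>i\<in>{1..m}. x i \<le> m - 1" using red km by force
        have "(\<Sum>i=1..m. x i) \<le> (\<Sum>i=1..m. m - 1)" by (rule sum_mono) (use lt in auto)
        hence u: "x k \<le> m * (m - 1)" using eq by simp
        have "(\<Sum>i=1..m. (1::nat)) \<le> (\<Sum>i=1..m. x i)" by (rule sum_mono) (use rs in auto)
        hence l: "x k \<ge> m" using eq by simp
        have "m * (m - 1) < m * m" using m1 by simp
        moreover have "x k < m \<or> x k \<ge> m*m" using red km by simp
        ultimately show False using u l by linarith
      qed
    next
      assume all1: "\<forall>i\<in>{1..k}. \<chi> (x i) = 1"
      hence blue: "\<forall>i\<in>{1..k}. m \<le> x i \<and> x i \<le> m*m-1"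
        by (auto simp: \<chi>_def split: if_splits)
      have "(\<Sum>i=1..m. m) \<le> (\<Sum>i=1..m. x i)" by (rule sum_mono) (use blue km in auto)
      hence "x k \<ge> m*m" using eq by simp
      moreover have "x k \<le> m*m-1" using blue km by auto
      ultimately show False using m1 le_square[of m] by linarith
    qed
  qed
  have "S32 k k = m*m+m-1"
    unfolding S32_def
  proof (rule Least_equality)
    show "?P (m*m+m-1)" by (rule up)
  next
    fix n assume "?P n" thus "m*m+m-1 \<le> n" using low by (meson not_less)
  qed
  thus ?thesis using N by simp
qed

end
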